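(* Let $q:\mathbb{R}\to\mathbb{C}$ be a Schwartz-class function and set $r(x)=-q^*(-x)$ (the reverse-space reduction, i.e. $Q(x)=\begin{pmatrix}0&q(x)\\-q^*(-x)&0\end{pmatrix}$). Then, for the eigenvalue problem $Y_x=-i\zeta\Lambda Y+QY$ and its adjoint $K_x=i\zeta K\Lambda-KQ$: (1) If $\zeta\in\mathbb{C}_+$ is an eigenvalue with eigenfunction $Y$ and eigenvector $v_0$, then $-\zeta^*\in\mathbb{C}_+$ is also an eigenvalue, $\widehat Y(x)=\sigma_1Y^*(-x)$ is an eigenfunction for it, and its eigenvector is $-\sigma_1 v_0^*$. Consequently, if $\zeta\notin i\mathbb{R}_+$ (so that $-\zeta^*\neq\zeta$), every eigenvector of $-\zeta^*$ is a nonzero scalar multiple of $\sigma_1v_0^*$. (2) If $\zeta\in i\mathbb{R}_+$ is an eigenvalue, then its eigenvector, normalized so that its first component equals $1$, has the form $v_0=[1,e^{i\theta}]^T$ with $\theta\in\mathbb{R}$. (3) If $\bar\zeta\in\mathbb{C}_-$ is an adjoint eigenvalue with adjoint eigenfunction $K$ and adjoint eigenvector $\bar v_0$, then $-\bar\zeta^*\in\mathbb{C}_-$ is also an adjoint eigenvalue, $\widehat K(x)=K^*(-x)\sigma_1$ is an adjoint eigenfunction for it, and its adjoint eigenvector is $-\bar v_0^*\sigma_1$. Consequently, if $\bar\zeta\notin i\mathbb{R}_-$, every adjoint eigenvector of $-\bar\zeta^*$ is a nonzero scalar multiple of $\bar v_0^*\sigma_1$. (4) If $\bar\zeta\in i\mathbb{R}_-$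 is an adjoint eigenvalue, then its adjoint eigenvector, normalized so that its first component equals $1$, has the form $\bar v_0=[1,e^{i\bar\theta}]$ with $\bar\theta\in\mathbb{R}$.
   Context: Notation: $\Lambda=\mathrm{diag}(1,-1)$, $\sigma_1=\begin{pmatrix}0&1\\1&0\end{pmatrix}$, $\mathbb{C}_\pm$ are the open upper/lower half planes, $i\mathbb{R}_\pm$ the positive/negative imaginary half-axes, $^*$ denotes complex conjugation and $^T$ transpose. For complex functions $q(x),r(x)$ decaying rapidly as $|x|\to\infty$, put $Q(x)=\begin{pmatrix}0&q(x)\\ r(x)&0\end{pmatrix}$ and consider the eigenvalue problem $Y_x=-i\zeta\Lambda Y+QY$ ($Y$ a $2\times1$ column) and the adjoint problem $K_x=i\zeta K\Lambda-KQ$ ($K$ a $1\times2$ row). Definition (eigenvalue, eigenvector): $\zeta\in\mathbb{C}_+$ is an eigenvalue if there is a nonzero solution $Y$ (an eigenfunction) of $Y_x=-i\zeta\Lambda Y+QY$ and constants $a,b\in\mathbb{C}$ with $e^{i\zeta x}Y(x)\to[a,0]^T$ as $x\to-\infty$ and $e^{-i\zeta x}Y(x)\to[0,-b]^T$ as $x\to+\infty$; the column vector $v_0=[a,b]^T$ is called the eigenvector associated with $Y$. (For such $\zeta$ the solutions with this decay at $-\infty$ form a one-dimensional space, so eigenvectors of a given eigenvalue are determined up to a nonzero scalar, and $a\neq0$.) Definition (adjoint eigenvalue, adjoint eigenvector): $\bar\zeta\in\mathbb{C}_-$ is an adjoint eigenvalue if there is a nonzero row solution $K$ of $K_x=i\bar\zeta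 K\Lambda-KQ$ and constants $\bar a,\bar b$ with $e^{-i\bar\zeta x}K(x)\to[\bar a,0]$ as $x\to-\infty$ and $e^{i\bar\zeta x}K(x)\to[0,-\bar b]$ as $x\to+\infty$; the row vector $\bar v_0=[\bar a,\bar b]$ is the associated adjoint eigenvector (again determined up to a nonzero scalar, with $\bar a\ne0$). These eigenvalue problems are the $x$-parts of the Lax pair of the coupled system $iq_t+q_{xx}-2q^2r=0$, $ir_t-r_{xx}+2r^2q=0$, which under $r(x,t)=-q^*(-x,t)$ reduces to the reverse-space NLS equation $iq_t(x,t)+q_{xx}(x,t)+2q^2(x,t)q^*(-x,t)=0$; here $q$ plays the role of the initial condition $q(x,0)$. *)

theory Defs
  imports "HOL-Analysis.Analysis"
begin

definition schwartz :: "(real \<Rightarrow> complex) \<Rightarrow> bool" where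
  "schwartz q \<longleftrightarrow> (\<exists>D :: nat \<Rightarrow> real \<Rightarrow> complex.
      D 0 = q \<and>
      (\<forall>n x. (D n has_vector_derivative D (Suc n) x) (at x)) \<and>
      (\<forall>m n. bounded (range (\<lambda>x. of_real (x ^ m) * D n x))))"

text \<open>Column solution Y = (Y1, Y2) of  Y_x = -i zeta Lambda Y + Q Y,
  with Q = [[0,q],[r,0]], Lambda = diag(1,-1).\<close>
definition solves_eig :: "(real \<Rightarrow> complex) \<Rightarrow> (real \<Rightarrow> complex) \<Rightarrow> complex
     \<Rightarrow> (real \<Rightarrow> complex \<times> complex) \<Rightarrow> bool" where
  "solves_eig q r \<zeta> Y \<longleftrightarrow> (\<forall>x. (Y has_vector_derivative
      (- \<i> * \<zeta> * fst (Y x) + q x * snd (Y x),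
         \<i> * \<zeta> * snd (Y x) + r x * fst (Y x))) (at x))"

text \<open>Row solution K = (K1, K2) of  K_x = i zeta K Lambda - K Q.\<close>
definition solves_adj :: "(real \<Rightarrow> complex) \<Rightarrow> (real \<Rightarrow> complex) \<Rightarrow> complex
     \<Rightarrow> (real \<Rightarrow> complex \<times> complex) \<Rightarrow> bool" where
  "solves_adj q r \<zeta> K \<longleftrightarrow> (\<forall>x. (K has_vector_derivative
      (\<i> * \<zeta> * fst (K x) - snd (K x) * r x,
       - \<i> * \<zeta> * snd (K x) - fst (K x) * q x)) (at x))"

definition eigenfunction :: "(real \<Rightarrow> complex) \<Rightarrow> (real \<Rightarrow> complex) \<Rightarrow> complex
     \<Rightarrow> (real \<Rightarrow> complex \<times> complex) \<Rightarrow> complex \<times> complex \<Rightarrow> bool" where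
  "eigenfunction q r \<zeta> Y v \<longleftrightarrow> Im \<zeta> > 0 \<and> solves_eig q r \<zeta> Y \<and> (\<exists>x. Y x \<noteq> 0) \<and>
     ((\<lambda>x. (exp (\<i> * \<zeta> * of_real x) * fst (Y x), exp (\<i> * \<zeta> * of_real x) * snd (Y x)))
        \<longlongrightarrow> (fst v, 0)) at_bot \<and>
     ((\<lambda>x. (exp (- \<i> * \<zeta> * of_real x) * fst (Y x), exp (- \<i> * \<zeta> * of_real x) * snd (Y x)))
        \<longlongrightarrow> (0, - snd v)) at_top"

definition is_eigenvalue :: "(real \<Rightarrow> complex) \<Rightarrow> (real \<Rightarrow> complex) \<Rightarrow> complex \<Rightarrow> bool" where
  "is_eigenvalue q r \<zeta> \<longleftrightarrow> (\<exists>Y v. eigenfunction q r \<zeta> Y v)"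

definition is_eigenvector :: "(real \<Rightarrow> complex) \<Rightarrow> (real \<Rightarrow> complex) \<Rightarrow> complex \<Rightarrow> complex \<times> complex \<Rightarrow> bool" where
  "is_eigenvector q r \<zeta> v \<longleftrightarrow> (\<exists>Y. eigenfunction q r \<zeta> Y v)"

definition adj_eigenfunction :: "(real \<Rightarrow> complex) \<Rightarrow> (real \<Rightarrow> complex) \<Rightarrow> complex
     \<Rightarrow> (real \<Rightarrow> complex \<times> complex) \<Rightarrow> complex \<times> complex \<Rightarrow> bool" where
  "adj_eigenfunction q r \<zeta> K v \<longleftrightarrow> Im \<zeta> < 0 \<and> solves_adj q r \<zeta> K \<and> (\<exists>x. K x \<noteq> 0) \<and>
     ((\<lambda>x. (exp (- \<i> * \<zeta> * of_real x) * fst (K x), exp (- \<i> * \<zeta> * of_real x) * snd (K x)))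
        \<longlongrightarrow> (fst v, 0)) at_bot \<and>
     ((\<lambda>x. (exp (\<i> * \<zeta> * of_real x) * fst (K x), exp (\<i> * \<zeta> * of_real x) * snd (K x)))
        \<longlongrightarrow> (0, - snd v)) at_top"

definition is_adj_eigenvalue :: "(real \<Rightarrow> complex) \<Rightarrow> (real \<Rightarrow> complex) \<Rightarrow> complex \<Rightarrow> bool" where
  "is_adj_eigenvalue q r \<zeta> \<longleftrightarrow> (\<exists>K v. adj_eigenfunction q r \<zeta> K v)"

definition is_adj_eigenvector :: "(real \<Rightarrow> complex) \<Rightarrow> (real \<Rightarrow> complex) \<Rightarrow> complex \<Rightarrow> complex \<times> complex \<Rightarrow> bool" where
  "is_adj_eigenvector q r \<zeta> v \<longleftrightarrow> (\<exists>K. adj_eigenfunction q r \<zeta> K v)"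

end

theory Submission
  imports Defs
begin

lemma normsq_deriv:
  assumes "(g has_vector_derivative g') (at x)"
  shows "((\<lambda>x. (cmod (g x))^2) has_real_derivative 2 * Re (cnj (g x) * g')) (at x)"
proof -
  have "((\<lambda>x. g x * cnj (g x)) has_vector_derivative (g x * cnj g' + g' * cnj (g x))) (at x)"
    by (intro derivative_intros assms)
  from bounded_linear.has_vector_derivative[OF bounded_linear_Re this]
  have "((\<lambda>x. Re (g x * cnj (g x))) has_vector_derivative Re (g x * cnj g' + g' * cnj (g x))) (at x)" .
  moreover have "\<And>x. Re (g x * cnj (g x)) = (cmod (g x))^2"
    by (metis Re_complex_of_real complex_norm_square)
  moreover have "Re (g x * cnj g' + g' * cnj (g x)) = 2 * Re (cnj (g x) * g')"
    by simp
  ultimately show ?thesis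
    by (simp add: has_real_derivative_iff_has_vector_derivative mult.commute)
qed

lemma fst_deriv: "(Y has_vector_derivative D) (at x) \<Longrightarrow> ((\<lambda>x. fst (Y x)) has_vector_derivative fst D) (at x)"
  by (rule bounded_linear.has_vector_derivative[OF bounded_linear_fst])
lemma snd_deriv: "(Y has_vector_derivative D) (at x) \<Longrightarrow> ((\<lambda>x. snd (Y x)) has_vector_derivative snd D) (at x)"
  by (rule bounded_linear.has_vector_derivative[OF bounded_linear_snd])

lemma re_term:
  fixes y1 y2 q z :: complex
  shows "Re (cnj y1 * (z * y1 + q * y2)) = Re z * (cmod y1)^2 + Re (q * cnj y1 * y2)"
proof -
  have "cnj y1 * (z * y1 + q * y2) = z * (y1 * cnj y1) + q * cnj y1 * y2" by (simp add: algebra_simps)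
  also have "y1 * cnj y1 = of_real ((cmod y1)^2)" by (metis complex_norm_square of_real_power)
  finally show ?thesis by simp
qed

lemma re_bound:
  fixes q y1 y2 :: complex
  shows "Re (q * cnj y1 * y2) \<le> cmod q * cmod y1 * cmod y2"
  by (metis complex_Re_le_cmod complex_mod_cnj norm_mult)

lemma key_ineq:
  fixes u v k a b beta :: real
  assumes "0 \<le> u" "0 \<le> v" "0 \<le> k" "0 \<le> beta" "a \<le> k * u * v" "b \<le> k * u * v"
  shows "2 * (beta * u^2 + a) + 2 * ((- beta) * v^2 + b) + (- 2 * beta - 2 * k) * (u^2 + v^2) \<le> 0"
proof -
  have "0 \<le> k * (u - v)^2" using assms by simp
  then have "0 \<le> k * u^2 - 2 * k * u * v + k * v^2" by (simp add: power2_eq_square algebra_simps)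
  moreover have "0 \<le> beta * v^2" using assms by simp
  moreover have "2 * (beta * u^2 + a) + 2 * ((- beta) * v^2 + b) + (- 2 * beta - 2 * k) * (u^2 + v^2)
     = 2 * a + 2 * b - 4 * (beta * v^2) - 2 * (k * u^2) - 2 * (k * v^2)" by (simp add: algebra_simps)
  ultimately show ?thesis using assms by linarith
qed

lemma vanish:
  fixes q r :: "real \<Rightarrow> complex" and C :: real
  assumes Cq: "\<And>x. cmod (q x) * (1 + x^2) \<le> C" and Cr: "\<And>x. cmod (r x) * (1 + x^2) \<le> C"
    and Im: "Im \<zeta> > 0" and sol: "solves_eig q r \<zeta> Y"
    and lim: "((\<lambda>x. (exp (\<i> * \<zeta> * of_real x) * fst (Y x), exp (\<i> * \<zeta> * of_real x) * snd (Y x))) \<longlongrightarrow> (0,0)) at_bot"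
  shows "Y x0 = 0"
proof -
  define beta where "beta = Im \<zeta>"
  have C0: "0 \<le> C" using Cq[of 0] by (smt (verit) norm_ge_zero mult_nonneg_nonneg zero_le_power2)
  define N where "N x = (cmod (fst (Y x)))^2 + (cmod (snd (Y x)))^2" for x
  define phi where "phi x = - 2 * beta * x - 2 * C * arctan x" for x
  define V where "V x = N x * exp (phi x)" for x
  have deriv: "\<exists>d. (V has_real_derivative d) (at t) \<and> d \<le> 0" for t
  proof -
    let ?y1 = "fst (Y t)" and ?y2 = "snd (Y t)"
    have dY: "(Y has_vector_derivative (- \<i> * \<zeta> * ?y1 + q t * ?y2, \<i> * \<zeta> * ?y2 + r t * ?y1)) (at t)"
      using sol unfolding solves_eig_def by blast
    have d1: "((\<lambda>x. (cmod (fst (Y x)))^2) has_real_derivative 2 * Re (cnj ?y1 * (- \<i> * \<zeta> * ?y1 + q t * ?y2))) (at t)"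
      using normsq_deriv[OF fst_deriv[OF dY]] by simp
    have d2: "((\<lambda>x. (cmod (snd (Y x)))^2) has_real_derivative 2 * Re (cnj ?y2 * (\<i> * \<zeta> * ?y2 + r t * ?y1))) (at t)"
      using normsq_deriv[OF snd_deriv[OF dY]] by simp
    have dphi: "(phi has_real_derivative (- 2 * beta - 2 * C * inverse (1 + t^2))) (at t)"
      unfolding phi_def[abs_def] by (auto intro!: derivative_eq_intros DERIV_arctan)
    define N' where "N' = 2 * Re (cnj ?y1 * (- \<i> * \<zeta> * ?y1 + q t * ?y2)) + 2 * Re (cnj ?y2 * (\<i> * \<zeta> * ?y2 + r t * ?y1))"
    have dN: "(N has_real_derivative N') (at t)"
      unfolding N_def[abs_def] N'_def by (intro derivative_intros d1 d2)
    have dV: "(V has_real_derivative (N' * exp (phi t) + N t * (exp (phi t) * (- 2 * beta - 2 * C * inverse (1 + t^2))))) (at t)"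
    proof -
      have "((\<lambda>x. exp (phi x)) has_real_derivative exp (phi t) * (- 2 * beta - 2 * C * inverse (1 + t^2))) (at t)"
        by (rule DERIV_chain2[OF DERIV_exp dphi])
      from DERIV_mult[OF dN this] show ?thesis unfolding V_def[abs_def] by (simp add: mult.commute)
    qed
    define k where "k = C * inverse (1 + t^2)"
    have k0: "0 \<le> k" unfolding k_def using C0 by (simp add: add_pos_nonneg)
    have qk: "cmod (q t) \<le> k"
      unfolding k_def using Cq[of t] by (simp add: field_simps add_pos_nonneg)
    have rk: "cmod (r t) \<le> k"
      unfolding k_def using Cr[of t] by (simp add: field_simps add_pos_nonneg)
    have A: "Re (q t * cnj ?y1 * ?y2) \<le> k * cmod ?y1 * cmod ?y2"
      using re_bound[of "q t" ?y1 ?y2] qk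
      by (smt (verit) mult_right_mono norm_ge_zero mult_nonneg_nonneg)
    have B: "Re (r t * cnj ?y2 * ?y1) \<le> k * cmod ?y1 * cmod ?y2"
      using re_bound[of "r t" ?y2 ?y1] rk
      by (smt (verit) mult_right_mono norm_ge_zero mult_nonneg_nonneg mult.commute mult.assoc)
    have e1: "Re (- \<i> * \<zeta>) = beta" and e2: "Re (\<i> * \<zeta>) = - beta" unfolding beta_def by simp_all
    have "N' = 2 * (beta * (cmod ?y1)^2 + Re (q t * cnj ?y1 * ?y2)) + 2 * ((- beta) * (cmod ?y2)^2 + Re (r t * cnj ?y2 * ?y1))"
      unfolding N'_def re_term e1 e2 by simp
    then have "N' + (- 2 * beta - 2 * k) * N t \<le> 0"
      unfolding N_def using key_ineq[OF norm_ge_zero norm_ge_zero k0 _ A B] Im beta_def by simp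
    then have "(N' + (- 2 * beta - 2 * k) * N t) * exp (phi t) \<le> 0"
      by (simp add: mult_nonpos_nonneg)
    then show ?thesis using dV unfolding k_def by (intro exI[of _ "N' * exp (phi t) + N t * (exp (phi t) * (- 2 * beta - 2 * C * inverse (1 + t^2)))"]) (auto simp: algebra_simps)
  qed
  have mono: "V x \<le> V y" if "y \<le> x" for x y
    using DERIV_nonpos_imp_nonincreasing[OF that] deriv by blast
  have Vlim: "(V \<longlongrightarrow> 0) at_bot"
  proof -
    have z1: "((\<lambda>x. exp (\<i> * \<zeta> * of_real x) * fst (Y x)) \<longlongrightarrow> 0) at_bot"
      using tendsto_fst[OF lim] by simp
    have z2: "((\<lambda>x. exp (\<i> * \<zeta> * of_real x) * snd (Y x)) \<longlongrightarrow> 0) at_bot"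
      using tendsto_snd[OF lim] by simp
    have "((\<lambda>x. ((cmod (exp (\<i> * \<zeta> * of_real x) * fst (Y x)))^2 + (cmod (exp (\<i> * \<zeta> * of_real x) * snd (Y x)))^2) * exp (- 2 * C * arctan x)) \<longlongrightarrow> ((0^2 + 0^2) * exp (- 2 * C * (- (pi/2))))) at_bot"
      by (intro tendsto_intros tendsto_norm_zero z1 z2 tendsto_arctan_at_bot)
    moreover have "((cmod (exp (\<i> * \<zeta> * of_real x) * fst (Y x)))^2 + (cmod (exp (\<i> * \<zeta> * of_real x) * snd (Y x)))^2) * exp (- 2 * C * arctan x) = V x" for x
    proof -
      define e where "e = exp (- (beta * x))"
      have ne: "cmod (exp (\<i> * \<zeta> * of_real x)) = e" unfolding e_def beta_def by simp
      have "exp (phi x) = e^2 * exp (- 2 * C * arctan x)"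
        unfolding phi_def e_def by (simp add: exp_add[symmetric] exp_double[symmetric] algebra_simps)
      then show ?thesis
        unfolding V_def N_def by (simp add: norm_mult ne power_mult_distrib algebra_simps e_def beta_def)
    qed
    ultimately show ?thesis by simp
  qed
  have "V x0 \<le> 0"
  proof (rule tendsto_le[OF _ Vlim tendsto_const])
    show "\<forall>\<^sub>F x in at_bot. V x0 \<le> V x"
      unfolding eventually_at_bot_linorder by (intro exI[of _ x0]) (auto intro: mono)
  qed simp
  moreover have "0 \<le> V x0" unfolding V_def N_def by simp
  ultimately have "N x0 = 0" unfolding V_def by simp
  then show ?thesis unfolding N_def by (simp add: prod_eq_iff add_nonneg_eq_0_iff)
qed


lemma refl_deriv:
  assumes "(Y has_vector_derivative D) (at (- x))"
  shows "((\<lambda>x. Y (- x)) has_vector_derivative - D) (at x)"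
proof -
  have "(uminus has_vector_derivative (-1::real)) (at x)"
    by (auto intro!: derivative_eq_intros simp: has_real_derivative_iff_has_vector_derivative[symmetric])
  from vector_diff_chain_at[OF this] assms show ?thesis by (simp add: o_def)
qed

lemma lim_refl_bot: "(f \<longlongrightarrow> l) at_top \<Longrightarrow> ((\<lambda>x::real. f (- x)) \<longlongrightarrow> l) at_bot"
  by (rule filterlim_compose[OF _ filterlim_uminus_at_top_at_bot])
lemma lim_refl_top: "(f \<longlongrightarrow> l) at_bot \<Longrightarrow> ((\<lambda>x::real. f (- x)) \<longlongrightarrow> l) at_top"
  by (rule filterlim_compose[OF _ filterlim_uminus_at_bot_at_top])

lemma eig_sym:
  assumes r_def: "r = (\<lambda>x. - cnj (q (- x)))" and E: "eigenfunction q r \<zeta> Y (a, b)"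
  shows "eigenfunction q r (- cnj \<zeta>) (\<lambda>x. (cnj (snd (Y (- x))), cnj (fst (Y (- x))))) (- cnj b, - cnj a)"
proof -
  have Im: "Im \<zeta> > 0" and sol: "solves_eig q r \<zeta> Y" and nz: "\<exists>x. Y x \<noteq> 0"
   and lb: "((\<lambda>x. (exp (\<i> * \<zeta> * of_real x) * fst (Y x), exp (\<i> * \<zeta> * of_real x) * snd (Y x))) \<longlongrightarrow> (a, 0)) at_bot"
   and lt: "((\<lambda>x. (exp (- \<i> * \<zeta> * of_real x) * fst (Y x), exp (- \<i> * \<zeta> * of_real x) * snd (Y x))) \<longlongrightarrow> (0, - b)) at_top"
    using E unfolding eigenfunction_def by auto
  have sol': "solves_eig q r (- cnj \<zeta>) (\<lambda>x. (cnj (snd (Y (- x))), cnj (fst (Y (- x)))))"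
    unfolding solves_eig_def
  proof
    fix x
    have dY: "(Y has_vector_derivative (- \<i> * \<zeta> * fst (Y (-x)) + q (-x) * snd (Y (-x)), \<i> * \<zeta> * snd (Y (-x)) + r (-x) * fst (Y (-x)))) (at (- x))"
      using sol unfolding solves_eig_def by blast
    note dR = refl_deriv[OF dY]
    have ds: "((\<lambda>z. snd (Y (- z))) has_vector_derivative - (\<i> * \<zeta> * snd (Y (-x)) + r (-x) * fst (Y (-x)))) (at x)"
      using snd_deriv[OF dR] by simp
    have df: "((\<lambda>z. fst (Y (- z))) has_vector_derivative - (- \<i> * \<zeta> * fst (Y (-x)) + q (-x) * snd (Y (-x)))) (at x)"
      using fst_deriv[OF dR] by simp
    have "((\<lambda>x. (cnj (snd (Y (- x))), cnj (fst (Y (- x))))) has_vector_derivative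
       (cnj (- (\<i> * \<zeta> * snd (Y (-x)) + r (-x) * fst (Y (-x)))), cnj (- (- \<i> * \<zeta> * fst (Y (-x)) + q (-x) * snd (Y (-x)))))) (at x)"
      by (intro has_vector_derivative_Pair has_vector_derivative_cnj ds df)
    then show "((\<lambda>x. (cnj (snd (Y (- x))), cnj (fst (Y (- x))))) has_vector_derivative
       (- \<i> * - cnj \<zeta> * fst (cnj (snd (Y (- x))), cnj (fst (Y (- x)))) + q x * snd (cnj (snd (Y (- x))), cnj (fst (Y (- x)))),
        \<i> * - cnj \<zeta> * snd (cnj (snd (Y (- x))), cnj (fst (Y (- x)))) + r x * fst (cnj (snd (Y (- x))), cnj (fst (Y (- x))))))
       (at x)"
      by (simp add: r_def algebra_simps)
  qed
  have nz': "\<exists>x. (cnj (snd (Y (- x))), cnj (fst (Y (- x)))) \<noteq> 0"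
  proof -
    obtain x where "Y x \<noteq> 0" using nz by blast
    then show ?thesis by (intro exI[of _ "- x"]) (auto simp: prod_eq_iff)
  qed
  have e1: "exp (\<i> * - cnj \<zeta> * of_real x) * cnj w = cnj (exp (- \<i> * \<zeta> * of_real (- x)) * w)" for x w
    by (simp add: exp_cnj)
  have e2: "exp (- \<i> * - cnj \<zeta> * of_real x) * cnj w = cnj (exp (\<i> * \<zeta> * of_real (- x)) * w)" for x w
    by (simp add: exp_cnj)
  have lb': "((\<lambda>x. (exp (\<i> * - cnj \<zeta> * of_real x) * cnj (snd (Y (- x))), exp (\<i> * - cnj \<zeta> * of_real x) * cnj (fst (Y (- x))))) \<longlongrightarrow> (- cnj b, 0)) at_bot"
    unfolding e1
    using tendsto_cnj[OF lim_refl_bot[OF tendsto_snd[OF lt]]] tendsto_cnj[OF lim_refl_bot[OF tendsto_fst[OF lt]]]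
    by (intro tendsto_Pair) auto
  have lt': "((\<lambda>x. (exp (- \<i> * - cnj \<zeta> * of_real x) * cnj (snd (Y (- x))), exp (- \<i> * - cnj \<zeta> * of_real x) * cnj (fst (Y (- x))))) \<longlongrightarrow> (0, - (- cnj a))) at_top"
    unfolding e2
    using tendsto_cnj[OF lim_refl_top[OF tendsto_snd[OF lb]]] tendsto_cnj[OF lim_refl_top[OF tendsto_fst[OF lb]]]
    by (intro tendsto_Pair) auto
  show ?thesis unfolding eigenfunction_def using Im sol' nz' lb' lt' by auto
qed


lemma eig_fst_nz:
  assumes Cq: "\<And>x. cmod (q x) * (1 + x^2) \<le> C" and Cr: "\<And>x. cmod (r x) * (1 + x^2) \<le> C"
    and E: "eigenfunction q r \<zeta> Y (a, b)"
  shows "a \<noteq> 0"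
proof
  assume a0: "a = 0"
  have Im: "Im \<zeta> > 0" and sol: "solves_eig q r \<zeta> Y" and nz: "\<exists>x. Y x \<noteq> 0"
   and lb: "((\<lambda>x. (exp (\<i> * \<zeta> * of_real x) * fst (Y x), exp (\<i> * \<zeta> * of_real x) * snd (Y x))) \<longlongrightarrow> (a, 0)) at_bot"
    using E unfolding eigenfunction_def fst_conv snd_conv by blast+
  have "Y x = 0" for x
    by (rule vanish[OF Cq Cr Im sol lb[unfolded a0]])
  with nz show False by blast
qed

lemma eig_uniq:
  assumes Cq: "\<And>x. cmod (q x) * (1 + x^2) \<le> C" and Cr: "\<And>x. cmod (r x) * (1 + x^2) \<le> C"
    and E: "eigenfunction q r \<zeta> Y (a, b)" and E': "eigenfunction q r \<zeta> Y' (a', b')"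
  shows "b' = (a' / a) * b"
proof -
  have a0: "a \<noteq> 0" by (rule eig_fst_nz[OF Cq Cr E])
  define c where "c = a' / a"
  define W where "W x = (fst (Y' x) - c * fst (Y x), snd (Y' x) - c * snd (Y x))" for x
  have Im: "Im \<zeta> > 0" using E unfolding eigenfunction_def by auto
  have solW: "solves_eig q r \<zeta> W"
    unfolding solves_eig_def
  proof
    fix x
    have d: "(Y has_vector_derivative (- \<i> * \<zeta> * fst (Y x) + q x * snd (Y x), \<i> * \<zeta> * snd (Y x) + r x * fst (Y x))) (at x)"
      using E unfolding eigenfunction_def solves_eig_def by blast
    have d': "(Y' has_vector_derivative (- \<i> * \<zeta> * fst (Y' x) + q x * snd (Y' x), \<i> * \<zeta> * snd (Y' x) + r x * fst (Y' x))) (at x)"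
      using E' unfolding eigenfunction_def solves_eig_def by blast
    have "(W has_vector_derivative
        ((- \<i> * \<zeta> * fst (Y' x) + q x * snd (Y' x)) - c * (- \<i> * \<zeta> * fst (Y x) + q x * snd (Y x)),
         (\<i> * \<zeta> * snd (Y' x) + r x * fst (Y' x)) - c * (\<i> * \<zeta> * snd (Y x) + r x * fst (Y x)))) (at x)"
      unfolding W_def[abs_def]
      using has_vector_derivative_Pair[OF has_vector_derivative_diff[OF fst_deriv[OF d'] has_vector_derivative_mult_right[OF fst_deriv[OF d], of c]]
          has_vector_derivative_diff[OF snd_deriv[OF d'] has_vector_derivative_mult_right[OF snd_deriv[OF d], of c]]]
      by simp
    then show "(W has_vector_derivative (- \<i> * \<zeta> * fst (W x) + q x * snd (W x), \<i> * \<zeta> * snd (W x) + r x * fst (W x))) (at x)"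
      unfolding W_def by (simp add: algebra_simps)
  qed
  have lb: "((\<lambda>x. (exp (\<i> * \<zeta> * of_real x) * fst (Y x), exp (\<i> * \<zeta> * of_real x) * snd (Y x))) \<longlongrightarrow> (a, 0)) at_bot"
    using E unfolding eigenfunction_def fst_conv snd_conv by blast
  have lb': "((\<lambda>x. (exp (\<i> * \<zeta> * of_real x) * fst (Y' x), exp (\<i> * \<zeta> * of_real x) * snd (Y' x))) \<longlongrightarrow> (a', 0)) at_bot"
    using E' unfolding eigenfunction_def fst_conv snd_conv by blast
  have "((\<lambda>x. (exp (\<i> * \<zeta> * of_real x) * fst (Y' x) - c * (exp (\<i> * \<zeta> * of_real x) * fst (Y x)),
              exp (\<i> * \<zeta> * of_real x) * snd (Y' x) - c * (exp (\<i> * \<zeta> * of_real x) * snd (Y x)))) \<longlongrightarrow> (a' - c * a, 0 - c * 0)) at_bot"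
    using tendsto_Pair[OF tendsto_diff[OF tendsto_fst[OF lb'] tendsto_mult[OF tendsto_const tendsto_fst[OF lb]]]
       tendsto_diff[OF tendsto_snd[OF lb'] tendsto_mult[OF tendsto_const tendsto_snd[OF lb]]], of c c]
    by simp
  moreover have "a' - c * a = 0" unfolding c_def using a0 by simp
  moreover have "(\<lambda>x. (exp (\<i> * \<zeta> * of_real x) * fst (W x), exp (\<i> * \<zeta> * of_real x) * snd (W x))) =
     (\<lambda>x. (exp (\<i> * \<zeta> * of_real x) * fst (Y' x) - c * (exp (\<i> * \<zeta> * of_real x) * fst (Y x)),
              exp (\<i> * \<zeta> * of_real x) * snd (Y' x) - c * (exp (\<i> * \<zeta> * of_real x) * snd (Y x))))"
    unfolding W_def by (simp add: fun_eq_iff right_diff_distrib)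
  ultimately have lW: "((\<lambda>x. (exp (\<i> * \<zeta> * of_real x) * fst (W x), exp (\<i> * \<zeta> * of_real x) * snd (W x))) \<longlongrightarrow> (0, 0)) at_bot"
    by simp
  have W0: "W x = 0" for x by (rule vanish[OF Cq Cr Im solW lW])
  then have Yeq: "Y' x = (c * fst (Y x), c * snd (Y x))" for x
    using W0[of x] unfolding W_def by (simp add: prod_eq_iff)
  have lt0: "((\<lambda>x. (exp (- \<i> * \<zeta> * of_real x) * fst (Y x), exp (- \<i> * \<zeta> * of_real x) * snd (Y x))) \<longlongrightarrow> (0, - b)) at_top"
    using E unfolding eigenfunction_def fst_conv snd_conv by blast
  have lt0': "((\<lambda>x. (exp (- \<i> * \<zeta> * of_real x) * fst (Y' x), exp (- \<i> * \<zeta> * of_real x) * snd (Y' x))) \<longlongrightarrow> (0, - b')) at_top"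
    using E' unfolding eigenfunction_def fst_conv snd_conv by blast
  have lt: "((\<lambda>x. exp (- \<i> * \<zeta> * of_real x) * snd (Y x)) \<longlongrightarrow> - b) at_top"
    using tendsto_snd[OF lt0] by simp
  have lt': "((\<lambda>x. exp (- \<i> * \<zeta> * of_real x) * snd (Y' x)) \<longlongrightarrow> - b') at_top"
    using tendsto_snd[OF lt0'] by simp
  have "((\<lambda>x. exp (- \<i> * \<zeta> * of_real x) * snd (Y' x)) \<longlongrightarrow> c * - b) at_top"
    unfolding Yeq using tendsto_mult[OF tendsto_const lt, of c] by (simp add: mult.left_commute)
  from tendsto_unique[OF _ lt' this] have "- b' = c * - b" by simp
  then show ?thesis unfolding c_def by simp
qed


lemma part12:
  fixes q r :: "real \<Rightarrow> complex"
  assumes Cq: "\<And>x. cmod (q x) * (1 + x^2) \<le> C" and rdef: "r = (\<lambda>x. - cnj (q (- x)))"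
  shows
   "(\<forall>\<zeta> Y a b. eigenfunction q r \<zeta> Y (a, b) \<longrightarrow>
        is_eigenvalue q r (- cnj \<zeta>) \<and>
        eigenfunction q r (- cnj \<zeta>) (\<lambda>x. (cnj (snd (Y (- x))), cnj (fst (Y (- x))))) (- cnj b, - cnj a) \<and>
        (Re \<zeta> \<noteq> 0 \<longrightarrow> (\<forall>w. is_eigenvector q r (- cnj \<zeta>) w \<longrightarrow>
            (\<exists>c. c \<noteq> 0 \<and> w = (c * cnj b, c * cnj a))))) \<and>
    (\<forall>\<zeta> a b. Re \<zeta> = 0 \<and> Im \<zeta> > 0 \<and> is_eigenvector q r \<zeta> (a, b) \<longrightarrow>
        (\<exists>\<theta>::real. b / a = exp (\<i> * of_real \<theta>)))"
proof -
  have Cr: "cmod (r x) * (1 + x^2) \<le> C" for x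
    using Cq[of "- x"] unfolding rdef by simp
  have P1: "is_eigenvalue q r (- cnj \<zeta>) \<and>
        eigenfunction q r (- cnj \<zeta>) (\<lambda>x. (cnj (snd (Y (- x))), cnj (fst (Y (- x))))) (- cnj b, - cnj a) \<and>
        (Re \<zeta> \<noteq> 0 \<longrightarrow> (\<forall>w. is_eigenvector q r (- cnj \<zeta>) w \<longrightarrow>
            (\<exists>c. c \<noteq> 0 \<and> w = (c * cnj b, c * cnj a))))"
    if E: "eigenfunction q r \<zeta> Y (a, b)" for \<zeta> Y a b
  proof -
    have E2: "eigenfunction q r (- cnj \<zeta>) (\<lambda>x. (cnj (snd (Y (- x))), cnj (fst (Y (- x))))) (- cnj b, - cnj a)"
      by (rule eig_sym[OF rdef E])
    have "\<exists>c. c \<noteq> 0 \<and> w = (c * cnj b, c * cnj a)" if wv: "is_eigenvector q r (- cnj \<zeta>) w" for w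
    proof -
      obtain a' b' where w: "w = (a', b')" by (cases w)
      obtain Y' where E': "eigenfunction q r (- cnj \<zeta>) Y' (a', b')"
        using wv unfolding is_eigenvector_def w by blast
      have u: "b' = (a' / (- cnj b)) * (- cnj a)" by (rule eig_uniq[OF Cq Cr E2 E'])
      have nb: "- cnj b \<noteq> 0" by (rule eig_fst_nz[OF Cq Cr E2])
      have na: "a' \<noteq> 0" by (rule eig_fst_nz[OF Cq Cr E'])
      show ?thesis
        using nb na u w by (intro exI[of _ "a' / cnj b"]) (auto simp: field_simps)
    qed
    then show ?thesis using E2 unfolding is_eigenvalue_def by blast
  qed
  have P2: "\<exists>\<theta>::real. b / a = exp (\<i> * of_real \<theta>)"
    if h: "Re \<zeta> = 0" "Im \<zeta> > 0" "is_eigenvector q r \<zeta> (a, b)" for \<zeta> a b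
  proof -
    obtain Y where E: "eigenfunction q r \<zeta> Y (a, b)" using h unfolding is_eigenvector_def by blast
    have zz: "- cnj \<zeta> = \<zeta>" using h by (simp add: complex_eq_iff)
    have E2: "eigenfunction q r \<zeta> (\<lambda>x. (cnj (snd (Y (- x))), cnj (fst (Y (- x))))) (- cnj b, - cnj a)"
      using eig_sym[OF rdef E] zz by simp
    have u: "- cnj a = (- cnj b / a) * b" by (rule eig_uniq[OF Cq Cr E E2])
    have na: "a \<noteq> 0" by (rule eig_fst_nz[OF Cq Cr E])
    have nb: "- cnj b \<noteq> 0" by (rule eig_fst_nz[OF Cq Cr E2])
    have "cmod a = cmod b * cmod b / cmod a"
      using arg_cong[OF u, of cmod] by (simp add: norm_mult norm_divide)
    then have "cmod a * cmod a = cmod b * cmod b" using na by (simp add: field_simps)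
    then have "cmod a = cmod b" using power2_eq_imp_eq[of "cmod a" "cmod b"] by (simp add: power2_eq_square)
    moreover have "cmod a \<noteq> 0" using na by simp
    ultimately have "cmod b / cmod a = 1" by simp
    then have "cmod (b / a) = 1" by (metis norm_divide)
    then have "exp (\<i> * of_real (Arg2pi (b / a))) = b / a" using complex_norm_eq_1_exp by blast
    then show ?thesis by (intro exI[of _ "Arg2pi (b / a)"]) simp
  qed
  show ?thesis using P1 P2 by blast
qed

lemma minus_swap: "- u - v = - v - (u::complex)" by simp

lemma adj_red: "adj_eigenfunction q r \<zeta> K v = eigenfunction (\<lambda>x. - r x) (\<lambda>x. - q x) (- \<zeta>) K v"
  unfolding adj_eigenfunction_def eigenfunction_def solves_adj_def solves_eig_def
  by (simp add: algebra_simps minus_swap)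

lemma adj_red2: "is_adj_eigenvalue q r \<zeta> = is_eigenvalue (\<lambda>x. - r x) (\<lambda>x. - q x) (- \<zeta>)"
  "is_adj_eigenvector q r \<zeta> v = is_eigenvector (\<lambda>x. - r x) (\<lambda>x. - q x) (- \<zeta>) v"
  unfolding is_adj_eigenvalue_def is_eigenvalue_def is_adj_eigenvector_def is_eigenvector_def adj_red by simp_all

theorem theorem1:
  fixes q :: "real \<Rightarrow> complex"
  assumes "schwartz q"
  defines "r \<equiv> (\<lambda>x. - cnj (q (- x)))"
  shows
   "(\<forall>\<zeta> Y a b. eigenfunction q r \<zeta> Y (a, b) \<longrightarrow>
        is_eigenvalue q r (- cnj \<zeta>) \<and>
        eigenfunction q r (- cnj \<zeta>) (\<lambda>x. (cnj (snd (Y (- x))), cnj (fst (Y (- x))))) (- cnj b, - cnj a) \<and>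
        (Re \<zeta> \<noteq> 0 \<longrightarrow> (\<forall>w. is_eigenvector q r (- cnj \<zeta>) w \<longrightarrow>
            (\<exists>c. c \<noteq> 0 \<and> w = (c * cnj b, c * cnj a))))) \<and>
    (\<forall>\<zeta> a b. Re \<zeta> = 0 \<and> Im \<zeta> > 0 \<and> is_eigenvector q r \<zeta> (a, b) \<longrightarrow>
        (\<exists>\<theta>::real. b / a = exp (\<i> * of_real \<theta>))) \<and>
    (\<forall>\<zeta> K a b. adj_eigenfunction q r \<zeta> K (a, b) \<longrightarrow>
        is_adj_eigenvalue q r (- cnj \<zeta>) \<and>
        adj_eigenfunction q r (- cnj \<zeta>) (\<lambda>x. (cnj (snd (K (- x))), cnj (fst (K (- x))))) (- cnj b, - cnj a) \<and>
        (Re \<zeta> \<noteq> 0 \<longrightarrow> (\<forall>w. is_adj_eigenvector q r (- cnj \<zeta>) w \<longrightarrow>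
            (\<exists>c. c \<noteq> 0 \<and> w = (c * cnj b, c * cnj a))))) \<and>
    (\<forall>\<zeta> a b. Re \<zeta> = 0 \<and> Im \<zeta> < 0 \<and> is_adj_eigenvector q r \<zeta> (a, b) \<longrightarrow>
        (\<exists>\<theta>::real. b / a = exp (\<i> * of_real \<theta>)))"
proof -
  obtain D :: "nat \<Rightarrow> real \<Rightarrow> complex" where D0: "D 0 = q"
    and bd: "\<And>m n. bounded (range (\<lambda>x. of_real (x ^ m) * D n x))"
    using assms(1) unfolding schwartz_def by blast
  obtain B0 where B0: "\<And>x. cmod (q x) \<le> B0"
    using bd[of 0 0] unfolding D0 bounded_iff by auto
  obtain B2 where B2: "\<And>x. cmod (of_real (x ^ 2) * q x) \<le> B2"
    using bd[of 2 0] unfolding D0 bounded_iff by auto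
  have Cq: "cmod (q x) * (1 + x^2) \<le> B0 + B2" for x
    using B0[of x] B2[of x] by (simp add: norm_mult norm_power algebra_simps)
  define q2 where "q2 = (\<lambda>x. - r x)"
  have Cq2: "cmod (q2 x) * (1 + x^2) \<le> B0 + B2" for x
    using Cq[of "- x"] unfolding q2_def r_def by simp
  have r2: "(\<lambda>x. - q x) = (\<lambda>x. - cnj (q2 (- x)))"
    unfolding q2_def r_def by simp
  note A = part12[OF Cq r_def[THEN meta_eq_to_obj_eq]]
  note B = part12[OF Cq2 r2]
  have P3: "is_adj_eigenvalue q r (- cnj \<zeta>) \<and>
        adj_eigenfunction q r (- cnj \<zeta>) (\<lambda>x. (cnj (snd (K (- x))), cnj (fst (K (- x))))) (- cnj b, - cnj a) \<and>
        (Re \<zeta> \<noteq> 0 \<longrightarrow> (\<forall>w. is_adj_eigenvector q r (- cnj \<zeta>) w \<longrightarrow>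
            (\<exists>c. c \<noteq> 0 \<and> w = (c * cnj b, c * cnj a))))"
    if "adj_eigenfunction q r \<zeta> K (a, b)" for \<zeta> K a b
  proof -
    have "eigenfunction q2 (\<lambda>x. - q x) (- \<zeta>) K (a, b)" using that unfolding adj_red q2_def .
    from B[THEN conjunct1, rule_format, OF this] show ?thesis
      unfolding adj_red adj_red2 q2_def by simp
  qed
  have P4: "\<exists>\<theta>::real. b / a = exp (\<i> * of_real \<theta>)"
    if "Re \<zeta> = 0 \<and> Im \<zeta> < 0 \<and> is_adj_eigenvector q r \<zeta> (a, b)" for \<zeta> a b
  proof -
    have "Re (- \<zeta>) = 0 \<and> Im (- \<zeta>) > 0 \<and> is_eigenvector q2 (\<lambda>x. - q x) (- \<zeta>) (a, b)"
      using that unfolding adj_red2 q2_def by simp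
    from B[THEN conjunct2, rule_format, OF this] show ?thesis .
  qed
  show ?thesis using A P3 P4 by blast
qed

end
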